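(* Let $T_{n,k}=\left[\begin{array}{cc|c}\alpha,&\beta&\gamma\\ \alpha',&\beta'&\gamma'\end{array}\right]_{n,k}$ be a GKP triangle with EGF $G(t,z)$. (i) If $\gamma=0$ and $\gamma'\neq0$, then the left-trimmed triangle $T^*_{n,k}:=(\gamma')^{-1}T_{n+1,k+1}$, $0\le k\le n$, is the GKP triangle $\left[\begin{array}{cc|c}\alpha,&\beta&\alpha+\beta\\ \alpha',&\beta'&\alpha'+\beta'+\gamma'\end{array}\right]_{n,k}$, and its EGF equals $(\gamma')^{-1}\,\frac{1}{t}\,\frac{\partial G}{\partial z}(t,z)$. (ii) If $\gamma'=0$ and $\gamma\neq0$, then the right-trimmed triangle $T^*_{n,k}:=\gamma^{-1}T_{n+1,k}$, $0\le k\le n$, is the GKP triangle $\left[\begin{array}{cc|c}\alpha,&\beta&\alpha+\gamma\\ \alpha',&\beta'&\alpha'\end{array}\right]_{n,k}$, and its EGF equals $\gamma^{-1}\frac{\partial G}{\partial z}(t,z)$.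
   Context: GKP triangle: for complex parameters $\alpha,\beta,\gamma,\alpha',\beta',\gamma'$, the array $T_{n,k}=\left[\begin{array}{cc|c}\alpha,&\beta&\gamma\\ \alpha',&\beta'&\gamma'\end{array}\right]_{n,k}$ ($n,k\in\mathbb Z$) is defined by $T_{0,0}=1$, $T_{n,k}=0$ if $n<0$, $k<0$ or $k>n$, and $T_{n+1,k+1}=[\alpha n+\beta(k+1)+\gamma]\,T_{n,k+1}+[\alpha' n+\beta' k+\gamma']\,T_{n,k}$ for all $n\ge0$ and all integers $k$. Its $n$th row polynomial is $G_n(t)=\sum_{k=0}^n T_{n,k}t^k$ and its (bivariate exponential generating function) EGF is $G(t,z)=\sum_{n\ge0}G_n(t)\,z^n/n!$. *)

theory Defs
  imports Complex_Main "HOL-Computational_Algebra.Polynomial" "HOL-Computational_Algebra.Formal_Power_Series"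
begin

text \<open>GKP triangle with parameters a b c a' b' c' (alpha, beta, gamma, alpha', beta', gamma'),
  indexed by n :: nat and k :: int.\<close>

primrec gkp :: "complex \<Rightarrow> complex \<Rightarrow> complex \<Rightarrow> complex \<Rightarrow> complex \<Rightarrow> complex \<Rightarrow> nat \<Rightarrow> int \<Rightarrow> complex" where
  "gkp a b c a' b' c' 0 k = (if k = 0 then 1 else 0)"
| "gkp a b c a' b' c' (Suc n) k =
     (if k < 0 \<or> k > int (Suc n) then 0
      else (a * of_nat n + b * of_int k + c) * gkp a b c a' b' c' n k
         + (a' * of_nat n + b' * of_int (k - 1) + c') * gkp a b c a' b' c' n (k - 1))"

definition gkp_row :: "complex \<Rightarrow> complex \<Rightarrow> complex \<Rightarrow> complex \<Rightarrow> complex \<Rightarrow> complex \<Rightarrow> nat \<Rightarrow> complex poly" where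
  "gkp_row a b c a' b' c' n = (\<Sum>k\<le>n. monom (gkp a b c a' b' c' n (int k)) k)"

text \<open>Bivariate EGF G(t,z) = sum_n G_n(t) z^n / n!, as a formal power series in z
  with coefficients in the polynomial ring C[t].\<close>
definition gkp_egf :: "complex \<Rightarrow> complex \<Rightarrow> complex \<Rightarrow> complex \<Rightarrow> complex \<Rightarrow> complex \<Rightarrow> complex poly fps" where
  "gkp_egf a b c a' b' c' = Abs_fps (\<lambda>n. smult (inverse (fact n)) (gkp_row a b c a' b' c' n))"

definition tri_egf :: "(nat \<Rightarrow> int \<Rightarrow> complex) \<Rightarrow> complex poly fps" where
  "tri_egf T = Abs_fps (\<lambda>n. smult (inverse (fact n)) (\<Sum>k\<le>n. monom (T n (int k)) k))"

end

theory Submission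
  imports Defs
begin

lemma gkp_out: "k < 0 \<or> k > int n \<Longrightarrow> gkp a b c a' b' c' n k = 0"
  by (induction n arbitrary: k) auto

lemma gkp_Suc0: "c = 0 \<Longrightarrow> gkp a b c a' b' c' (Suc n) 0 = 0"
  by (induction n) (auto simp: gkp_out)

lemma gkp_diag: "c' = 0 \<Longrightarrow> gkp a b c a' b' c' (Suc n) (int (Suc n)) = 0"
proof (induction n)
  case 0 then show ?case by simp
next
  case (Suc n)
  have z: "gkp a b c a' b' c' (Suc n) (int (Suc (Suc n))) = 0" by (rule gkp_out) auto
  have "gkp a b c a' b' c' (Suc (Suc n)) (int (Suc (Suc n))) =
     (a * of_nat (Suc n) + b * of_int (int (Suc (Suc n))) + c) * gkp a b c a' b' c' (Suc n) (int (Suc (Suc n)))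
      + (a' * of_nat (Suc n) + b' * of_int (int (Suc (Suc n)) - 1) + c') * gkp a b c a' b' c' (Suc n) (int (Suc (Suc n)) - 1)"
    by (simp only: gkp.simps) simp
  also have "int (Suc (Suc n)) - 1 = int (Suc n)" by simp
  finally show ?case using Suc z by simp
qed

lemma coeff_row: "coeff (gkp_row a b c a' b' c' n) j = gkp a b c a' b' c' n (int j)"
proof -
  have "coeff (gkp_row a b c a' b' c' n) j = (\<Sum>k\<le>n. if k = j then gkp a b c a' b' c' n (int k) else 0)"
    unfolding gkp_row_def coeff_sum coeff_monom by (rule sum.cong) auto
  also have "\<dots> = (if j \<le> n then gkp a b c a' b' c' n (int j) else 0)"
    by (simp add: sum.delta')
  also have "\<dots> = gkp a b c a' b' c' n (int j)" by (auto simp: gkp_out)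
  finally show ?thesis .
qed

lemma coeff_trirow: "coeff (\<Sum>k\<le>n. monom (T n (int k)) k) j = (if j \<le> n then T n (int j) else 0)"
proof -
  have "coeff (\<Sum>k\<le>n. monom (T n (int k)) k) j = (\<Sum>k\<le>n. if k = j then T n (int k) else 0)"
    unfolding coeff_sum coeff_monom by (rule sum.cong) auto
  also have "\<dots> = (if j \<le> n then T n (int j) else 0)"
    by (simp add: sum.delta')
  finally show ?thesis .
qed

lemma deriv_coeff: "coeff (fps_nth (fps_deriv (gkp_egf a b c a' b' c')) n) j
   = inverse (fact n) * gkp a b c a' b' c' (Suc n) (int j)"
proof -
  have "coeff (fps_nth (fps_deriv (gkp_egf a b c a' b' c')) n) j
     = of_nat (Suc n) * (inverse (fact (Suc n)) * gkp a b c a' b' c' (Suc n) (int j))"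
    by (simp add: gkp_egf_def of_nat_mult_conv_smult coeff_row del: of_nat_Suc fact_Suc)
  also have "\<dots> = inverse (fact n) * gkp a b c a' b' c' (Suc n) (int j)"
    by (simp add: field_simps del: of_nat_Suc)
  finally show ?thesis .
qed

lemma const_coeff: "coeff (fps_nth (fps_const [:x:] * F) n) j = x * coeff (fps_nth F n) j"
  by simp

lemma part1_rec:
  assumes "c = 0" "c' \<noteq> 0"
  shows "inverse c' * gkp a b c a' b' c' (Suc n) (k + 1) = gkp a b (a + b) a' b' (a' + b' + c') n k"
proof (induction n arbitrary: k)
  case 0
  consider "k < -1" | "k = -1" | "k = 0" | "k > 0" by linarith
  then show ?case
  proof cases
    case 1 then show ?thesis by (simp add: gkp_out)
  next
    case 2 then show ?thesis using gkp_Suc0[OF assms(1), of a b a' b' c' 0] by simp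
  next
    case 3 then show ?thesis using assms by simp
  next
    case 4 then show ?thesis by (subst gkp_out) auto
  qed
next
  case (Suc n)
  consider "k < -1" | "k = -1" | "k > int (Suc n)" | "0 \<le> k \<and> k \<le> int (Suc n)" by linarith
  then show ?case
  proof cases
    case 1 then show ?thesis by (simp add: gkp_out)
  next
    case 2 then show ?thesis using gkp_Suc0[OF assms(1), of a b a' b' c' "Suc n"] by (simp add: gkp_out)
  next
    case 3 then show ?thesis by (simp add: gkp_out)
  next
    case 4
    have IH1: "inverse c' * gkp a b c a' b' c' (Suc n) (k + 1) = gkp a b (a + b) a' b' (a' + b' + c') n k"
      by (rule Suc)
    have IH2: "inverse c' * gkp a b c a' b' c' (Suc n) k = gkp a b (a + b) a' b' (a' + b' + c') n (k - 1)"
      using Suc[of "k - 1"] by simp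
    have L: "gkp a b c a' b' c' (Suc (Suc n)) (k + 1) =
       (a * of_nat (Suc n) + b * of_int (k + 1) + c) * gkp a b c a' b' c' (Suc n) (k + 1)
         + (a' * of_nat (Suc n) + b' * of_int k + c') * gkp a b c a' b' c' (Suc n) k"
      using 4 by (simp del: of_nat_Suc)
    have R: "gkp a b (a + b) a' b' (a' + b' + c') (Suc n) k =
       (a * of_nat n + b * of_int k + (a + b)) * gkp a b (a + b) a' b' (a' + b' + c') n k
         + (a' * of_nat n + b' * of_int (k - 1) + (a' + b' + c')) * gkp a b (a + b) a' b' (a' + b' + c') n (k - 1)"
      using 4 by (simp del: of_nat_Suc)
    show ?thesis unfolding L R IH1[symmetric] IH2[symmetric] using assms
      by (simp add: algebra_simps)
  qed
qed

lemma part2_rec: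
  assumes "c' = 0" "c \<noteq> 0"
  shows "inverse c * gkp a b c a' b' c' (Suc n) k = gkp a b (a + c) a' b' a' n k"
proof (induction n arbitrary: k)
  case 0
  consider "k < 0" | "k = 0" | "k = 1" | "k > 1" by linarith
  then show ?case
  proof cases
    case 1 then show ?thesis by (simp add: gkp_out)
  next
    case 2 then show ?thesis using assms by simp
  next
    case 3 then show ?thesis using gkp_diag[OF assms(1), of a b c a' b' 0] by simp
  next
    case 4 then show ?thesis by (subst gkp_out) auto
  qed
next
  case (Suc n)
  consider "k < 0" | "k = int (Suc (Suc n))" | "k > int (Suc (Suc n))" | "0 \<le> k \<and> k \<le> int (Suc n)" by linarith
  then show ?case
  proof cases
    case 1 then show ?thesis by (simp add: gkp_out)
  next
    case 2 then show ?thesis using gkp_diag[OF assms(1), of a b c a' b' "Suc n"]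
      by (simp add: gkp_out del: of_nat_Suc)
  next
    case 3 then show ?thesis by (simp add: gkp_out)
  next
    case 4
    have IH1: "inverse c * gkp a b c a' b' c' (Suc n) k = gkp a b (a + c) a' b' a' n k"
      by (rule Suc)
    have IH2: "inverse c * gkp a b c a' b' c' (Suc n) (k - 1) = gkp a b (a + c) a' b' a' n (k - 1)"
      by (rule Suc)
    have L: "gkp a b c a' b' c' (Suc (Suc n)) k =
       (a * of_nat (Suc n) + b * of_int k + c) * gkp a b c a' b' c' (Suc n) k
         + (a' * of_nat (Suc n) + b' * of_int (k - 1) + c') * gkp a b c a' b' c' (Suc n) (k - 1)"
      using 4 by (simp del: of_nat_Suc)
    have R: "gkp a b (a + c) a' b' a' (Suc n) k =
       (a * of_nat n + b * of_int k + (a + c)) * gkp a b (a + c) a' b' a' n k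
         + (a' * of_nat n + b' * of_int (k - 1) + a') * gkp a b (a + c) a' b' a' n (k - 1)"
      using 4 by (simp del: of_nat_Suc)
    show ?thesis unfolding L R IH1[symmetric] IH2[symmetric] using assms
      by (simp add: algebra_simps)
  qed
qed

theorem mainTheorem1:
  fixes a b c a' b' c' :: complex
  shows
  "(c = 0 \<and> c' \<noteq> 0 \<longrightarrow>
     (\<forall>n::nat. \<forall>k::int. 0 \<le> k \<and> k \<le> int n \<longrightarrow>
        inverse c' * gkp a b c a' b' c' (Suc n) (k + 1) = gkp a b (a + b) a' b' (a' + b' + c') n k)
   \<and> fps_deriv (gkp_egf a b c a' b' c')
       = fps_const (monom c' 1) * tri_egf (\<lambda>n k. inverse c' * gkp a b c a' b' c' (Suc n) (k + 1))
   \<and> tri_egf (\<lambda>n k. inverse c' * gkp a b c a' b' c' (Suc n) (k + 1))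
       = Abs_fps (\<lambda>n. smult (inverse c') (fps_nth (fps_deriv (gkp_egf a b c a' b' c')) n div [:0, 1:])))
   \<and>
   (c' = 0 \<and> c \<noteq> 0 \<longrightarrow>
     (\<forall>n::nat. \<forall>k::int. 0 \<le> k \<and> k \<le> int n \<longrightarrow>
        inverse c * gkp a b c a' b' c' (Suc n) k = gkp a b (a + c) a' b' a' n k)
   \<and> tri_egf (\<lambda>n k. inverse c * gkp a b c a' b' c' (Suc n) k)
       = fps_const [:inverse c:] * fps_deriv (gkp_egf a b c a' b' c'))"
proof (intro conjI impI)
  assume h: "c = 0 \<and> c' \<noteq> 0"
  show "\<forall>n::nat. \<forall>k::int. 0 \<le> k \<and> k \<le> int n \<longrightarrow>
        inverse c' * gkp a b c a' b' c' (Suc n) (k + 1) = gkp a b (a + b) a' b' (a' + b' + c') n k"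
    using part1_rec[of c c'] h by blast
  define T where "T = (\<lambda>n k. inverse c' * gkp a b c a' b' c' (Suc n) (k + 1))"
  have D: "fps_deriv (gkp_egf a b c a' b' c') = fps_const (monom c' 1) * tri_egf T"
  proof (rule fps_ext, rule poly_eqI)
    fix n j
    show "coeff (fps_nth (fps_deriv (gkp_egf a b c a' b' c')) n) j =
          coeff (fps_nth (fps_const (monom c' 1) * tri_egf T) n) j"
    proof (cases j)
      case 0
      have "gkp a b c a' b' c' (Suc n) 0 = 0" using h by (simp only: gkp_Suc0)
      then show ?thesis using 0 unfolding deriv_coeff
        by (simp add:  tri_egf_def coeff_monom_mult)
    next
      case (Suc i)
      show ?thesis
      proof (cases "i \<le> n")
        case True then show ?thesis using Suc h
          unfolding deriv_coeff by (simp add:  tri_egf_def coeff_monom_mult coeff_trirow[of T] del: gkp.simps) (simp add: T_def add.commute del: gkp.simps)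
      next
        case False
        then have "gkp a b c a' b' c' (Suc n) (int j) = 0" using Suc by (intro gkp_out) auto
        then show ?thesis using Suc False
          unfolding deriv_coeff by (simp add:  tri_egf_def coeff_monom_mult coeff_trirow[of T] del: gkp.simps)
      qed
    qed
  qed
  then show "fps_deriv (gkp_egf a b c a' b' c')
       = fps_const (monom c' 1) * tri_egf (\<lambda>n k. inverse c' * gkp a b c a' b' c' (Suc n) (k + 1))"
    by (simp add: T_def)
  have "tri_egf T = Abs_fps (\<lambda>n. smult (inverse c') (fps_nth (fps_deriv (gkp_egf a b c a' b' c')) n div [:0, 1:]))"
  proof (rule fps_ext)
    fix n
    have m: "monom c' 1 = [:0, 1:] * [:c':]" by (simp add: monom_Suc monom_0)
    have "fps_nth (fps_deriv (gkp_egf a b c a' b' c')) n div [:0, 1:] = [:c':] * fps_nth (tri_egf T) n"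
      unfolding D fps_mult_left_const_nth m mult.assoc
      by (rule nonzero_mult_div_cancel_left) simp
    then show "fps_nth (tri_egf T) n = fps_nth (Abs_fps (\<lambda>n. smult (inverse c') (fps_nth (fps_deriv (gkp_egf a b c a' b' c')) n div [:0, 1:]))) n"
      using h by simp
  qed
  then show "tri_egf (\<lambda>n k. inverse c' * gkp a b c a' b' c' (Suc n) (k + 1))
       = Abs_fps (\<lambda>n. smult (inverse c') (fps_nth (fps_deriv (gkp_egf a b c a' b' c')) n div [:0, 1:]))"
    by (simp add: T_def)
next
  assume h: "c' = 0 \<and> c \<noteq> 0"
  show "\<forall>n::nat. \<forall>k::int. 0 \<le> k \<and> k \<le> int n \<longrightarrow>
        inverse c * gkp a b c a' b' c' (Suc n) k = gkp a b (a + c) a' b' a' n k"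
    using part2_rec[of c' c] h by blast
  show "tri_egf (\<lambda>n k. inverse c * gkp a b c a' b' c' (Suc n) k)
       = fps_const [:inverse c:] * fps_deriv (gkp_egf a b c a' b' c')"
  proof (rule fps_ext, rule poly_eqI)
    fix n j
    show "coeff (fps_nth (tri_egf (\<lambda>n k. inverse c * gkp a b c a' b' c' (Suc n) k)) n) j =
          coeff (fps_nth (fps_const [:inverse c:] * fps_deriv (gkp_egf a b c a' b' c')) n) j"
    proof (cases "j \<le> n")
      case True then show ?thesis
        unfolding const_coeff deriv_coeff by (simp add: tri_egf_def coeff_trirow[of "\<lambda>n k. inverse c * gkp a b c a' b' c' (Suc n) k"] del: gkp.simps)
    next
      case False
      have "gkp a b c a' b' c' (Suc n) (int j) = 0"
      proof (cases "j = Suc n")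
        case True then show ?thesis using gkp_diag[of c' a b c a' b' n] h by simp
      next
        case False then show ?thesis using \<open>\<not> j \<le> n\<close> by (intro gkp_out) auto
      qed
      then show ?thesis using False
        unfolding const_coeff deriv_coeff by (simp add: tri_egf_def coeff_trirow[of "\<lambda>n k. inverse c * gkp a b c a' b' c' (Suc n) k"] del: gkp.simps)
    qed
  qed
qed


end
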